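(* For all $n,k\in\mathbb N$ there exists $N\in\mathbb N$ such that every finite strongly connected digraph $D$ on at least $N$ vertices contains one of the following: (1) a dicycle on at least $n$ vertices; (2) an $n$-narrow semi-chain $(C_1,C_2,\ldots,C_k)$ of $k$ dicycles; (3) an $n$-short $(m,1)$-system of dipaths for some $m\ge (k-1)n+3$.
   Context: All digraphs are finite; a dipath is a directed path, a dicycle a directed cycle, and lengths count edges. A sequence $(C_1,\ldots,C_k)$ of dicycles is a semi-chain if for all $1\le i,j\le k$ we have $V(C_i)\cap V(C_j)\ne\emptyset$ if and only if $|i-j|=1$; it is $n$-narrow if $|V(C_i)|<n$ for every $i$. Let $x,y$ be two, possibly equal, vertices and $m,\ell$ positive integers. An $(m,\ell)$-system of $x$--$y$ dipaths is a system of $m+\ell$ internally disjoint dipaths (or dicycles through $x$ in case $x=y$), $m$ of which are $x$--$y$ dipaths and $\ell$ of which are $y$--$x$ dipaths; an $(m,\ell)$-system of dipaths is such a system for some $x,y$. It is $n$-short if, in case $x\ne y$, $|V(P)\cup V(Q)|<n$ for every $x$--$y$ dipath $P$ and every $y$--$x$ dipath $Q$ of the system, and, in case $x=y$, every dicycle of the system has length less than $n$. *)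

theory Defs
  imports Main
begin

text \<open>A (finite) digraph is given by a vertex set V and an arc relation E with E \<subseteq> V \<times> V.
  Dipaths and dicycles are represented as lists of distinct vertices.\<close>

definition dipath :: "('a \<times> 'a) set \<Rightarrow> 'a list \<Rightarrow> bool" where
  "dipath E P \<longleftrightarrow> P \<noteq> [] \<and> distinct P \<and>
     (\<forall>i. Suc i < length P \<longrightarrow> (P ! i, P ! Suc i) \<in> E)"

definition dicycle :: "('a \<times> 'a) set \<Rightarrow> 'a list \<Rightarrow> bool" where
  "dicycle E C \<longleftrightarrow> dipath E C \<and> (last C, hd C) \<in> E"

definition strongly_connected :: "'a set \<Rightarrow> ('a \<times> 'a) set \<Rightarrow> bool" where
  "strongly_connected V E \<longleftrightarrow> (\<forall>u\<in>V. \<forall>v\<in>V. (u, v) \<in> E\<^sup>*)"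

definition semi_chain :: "('a \<times> 'a) set \<Rightarrow> 'a list list \<Rightarrow> bool" where
  "semi_chain E Cs \<longleftrightarrow> (\<forall>C\<in>set Cs. dicycle E C) \<and>
     (\<forall>i<length Cs. \<forall>j<length Cs. i \<noteq> j \<longrightarrow>
        (set (Cs ! i) \<inter> set (Cs ! j) \<noteq> {} \<longleftrightarrow> (i = Suc j \<or> j = Suc i)))"

definition narrow :: "nat \<Rightarrow> 'a list list \<Rightarrow> bool" where
  "narrow n Cs \<longleftrightarrow> (\<forall>C\<in>set Cs. card (set C) < n)"

definition interior :: "'a list \<Rightarrow> 'a set" where
  "interior P = set (butlast (tl P))"

text \<open>An (m,l)-system of x--y dipaths: Ps lists m+l distinct, internally disjoint objects;
  the first m are x--y dipaths and the last l are y--x dipaths (x \<noteq> y), or, if x = y,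
  all of them are dicycles through x (written starting at x) pairwise meeting only in x.\<close>
definition dipath_system ::
  "('a \<times> 'a) set \<Rightarrow> 'a \<Rightarrow> 'a \<Rightarrow> nat \<Rightarrow> nat \<Rightarrow> 'a list list \<Rightarrow> bool" where
  "dipath_system E x y m l Ps \<longleftrightarrow> 0 < m \<and> 0 < l \<and> length Ps = m + l \<and> distinct Ps \<and>
     (if x = y then
        (\<forall>P\<in>set Ps. dicycle E P \<and> hd P = x) \<and>
        (\<forall>i<m+l. \<forall>j<m+l. i \<noteq> j \<longrightarrow> set (Ps ! i) \<inter> set (Ps ! j) = {x})
      else
        (\<forall>i<m. dipath E (Ps ! i) \<and> hd (Ps ! i) = x \<and> last (Ps ! i) = y) \<and>
        (\<forall>i. m \<le> i \<and> i < m + l \<longrightarrow> dipath E (Ps ! i) \<and> hd (Ps ! i) = y \<and> last (Ps ! i) = x) \<and>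
        (\<forall>i<m+l. \<forall>j<m+l. i \<noteq> j \<longrightarrow> interior (Ps ! i) \<inter> interior (Ps ! j) = {}))"

definition short_system :: "nat \<Rightarrow> 'a \<Rightarrow> 'a \<Rightarrow> nat \<Rightarrow> nat \<Rightarrow> 'a list list \<Rightarrow> bool" where
  "short_system n x y m l Ps \<longleftrightarrow>
     (if x = y then (\<forall>P\<in>set Ps. length P < n)
      else (\<forall>i<m. \<forall>j. m \<le> j \<and> j < m + l \<longrightarrow> card (set (Ps ! i) \<union> set (Ps ! j)) < n))"

end

theory Submission
  imports Defs
begin

lemma dipath_map:
  assumes "0 < L" "inj_on f {0..<L}" "\<forall>i. Suc i < L \<longrightarrow> (f i, f (Suc i)) \<in> E"
  shows "dipath E (map f [0..<L])"
  using assms unfolding dipath_def by (auto simp: distinct_map)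

lemma dipath_Cons:
  assumes "dipath E xs" "a \<notin> set xs" "(a, hd xs) \<in> E"
  shows "dipath E (a # xs)"
  using assms unfolding dipath_def
  apply (auto simp: nth_Cons split: nat.splits)
  by (metis hd_conv_nth)

locale rt = fixes E :: "('a \<times> 'a) set" and x :: 'a
begin

definition d where "d v = (LEAST i. (v,x) \<in> E^^i)"
definition p where "p v = (if v = x then x else SOME w. (v,w) \<in> E \<and> (w,x) \<in> E^^(d v - 1))"

lemma d_rel: "(v,x) \<in> E\<^sup>* \<Longrightarrow> (v,x) \<in> E^^(d v)"
  unfolding d_def rtrancl_power by (rule LeastI_ex)

lemma d_le: "(v,x) \<in> E^^i \<Longrightarrow> d v \<le> i"
  unfolding d_def by (rule Least_le)

lemma d_x: "d x = 0" using d_le[of x 0] by simp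

lemma d_0: "(v,x) \<in> E\<^sup>* \<Longrightarrow> d v = 0 \<Longrightarrow> v = x"
  using d_rel by fastforce

lemma p_props: assumes "(v,x) \<in> E\<^sup>*" "v \<noteq> x"
  shows "(v, p v) \<in> E \<and> (p v, x) \<in> E^^(d v - 1)"
proof -
  have "d v \<noteq> 0" using d_0 assms by blast
  then have "(v,x) \<in> E^^(Suc (d v - 1))" using d_rel[OF assms(1)] by simp
  then have "\<exists>w. (v,w) \<in> E \<and> (w,x) \<in> E^^(d v - 1)" by (rule relpow_Suc_D2)
  then have "(v, SOME w. (v,w) \<in> E \<and> (w,x) \<in> E^^(d v - 1)) \<in> E \<and> (SOME w. (v,w) \<in> E \<and> (w,x) \<in> E^^(d v - 1), x) \<in> E^^(d v - 1)"
    by (rule someI_ex)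
  then show ?thesis unfolding p_def using assms(2) by simp
qed

lemma p_reach: "(v,x) \<in> E\<^sup>* \<Longrightarrow> (p v, x) \<in> E\<^sup>*"
  by (metis p_def p_props relpow_imp_rtrancl)

lemma d_p: assumes "(v,x) \<in> E\<^sup>*" shows "d (p v) = d v - 1"
proof (cases "v = x")
  case True then show ?thesis by (simp add: p_def d_x)
next
  case False
  have a: "d (p v) \<le> d v - 1" by (rule d_le[OF conjunct2[OF p_props[OF assms False]]])
  have "(p v, x) \<in> E^^(d (p v))" by (rule d_rel[OF p_reach[OF assms]])
  then have "(v,x) \<in> E^^(Suc (d (p v)))" by (rule relpow_Suc_I2[OF conjunct1[OF p_props[OF assms False]]])
  then have "d v \<le> Suc (d (p v))" by (rule d_le)
  then show ?thesis using a by linarith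
qed

lemma pt_reach: "(v,x) \<in> E\<^sup>* \<Longrightarrow> ((p^^t) v, x) \<in> E\<^sup>*"
  by (induction t) (auto intro: p_reach)

lemma d_pt: "(v,x) \<in> E\<^sup>* \<Longrightarrow> d ((p^^t) v) = d v - t"
  by (induction t) (auto simp: d_p pt_reach)

lemma pt_d: "(v,x) \<in> E\<^sup>* \<Longrightarrow> (p^^(d v)) v = x"
  using d_0 d_pt pt_reach by auto

lemma pt_ne: "(v,x) \<in> E\<^sup>* \<Longrightarrow> t < d v \<Longrightarrow> (p^^t) v \<noteq> x"
proof
  assume "t < d v" "(v,x) \<in> E\<^sup>*" "(p^^t) v = x"
  then have "d x = d v - t" using d_pt by metis
  then show False using \<open>t < d v\<close> d_x by simp
qed

lemma pt_arc: "(v,x) \<in> E\<^sup>* \<Longrightarrow> t < d v \<Longrightarrow> ((p^^t) v, (p^^Suc t) v) \<in> E"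
  using p_props[OF pt_reach pt_ne] by auto

lemma pt_inj: "(v,x) \<in> E\<^sup>* \<Longrightarrow> s \<le> d v \<Longrightarrow> t \<le> d v \<Longrightarrow> (p^^s) v = (p^^t) v \<Longrightarrow> s = t"
  by (metis d_pt diff_diff_cancel)

lemma pt_add: "(p^^a) ((p^^b) v) = (p^^(a+b)) v"
  by (simp add: funpow_add)

lemma p_V: assumes "E \<subseteq> V \<times> V" "x \<in> V" "v \<in> V" "(v,x) \<in> E\<^sup>*" shows "p v \<in> V"
  using assms p_props[OF assms(4)] by (cases "v = x") (auto simp: p_def)

lemma pt_V: assumes "E \<subseteq> V \<times> V" "x \<in> V" "v \<in> V" "(v,x) \<in> E\<^sup>*" shows "(p^^t) v \<in> V"
  using assms by (induction t) (auto intro: p_V pt_reach)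

definition cyc where "cyc y = x # map (\<lambda>t. (p^^t) y) [0..<d y]"

lemma set_cyc: "set (cyc y) = insert x ((\<lambda>t. (p^^t) y) ` {0..<d y})"
  by (simp add: cyc_def)

lemma cyc_set: "(y,x) \<in> E\<^sup>* \<Longrightarrow> t \<le> d y \<Longrightarrow> (p^^t) y \<in> set (cyc y)"
  unfolding set_cyc by (cases "t = d y") (auto simp: pt_d)

lemma cyc_dicycle: assumes "(x,y) \<in> E" "y \<noteq> x" "(y,x) \<in> E\<^sup>*"
  shows "dicycle E (cyc y)"
proof -
  have dy: "0 < d y" using d_0 assms by blast
  have dp: "dipath E (map (\<lambda>t. (p^^t) y) [0..<d y])"
    apply (rule dipath_map[OF dy])
    using pt_inj[OF assms(3)] pt_arc[OF assms(3)] by (auto simp: inj_on_def)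
  have "x \<notin> set (map (\<lambda>t. (p^^t) y) [0..<d y])" using pt_ne[OF assms(3)] by (auto dest: sym)
  moreover have "hd (map (\<lambda>t. (p^^t) y) [0..<d y]) = y" using dy by (simp add: hd_map)
  ultimately have "dipath E (cyc y)" unfolding cyc_def using dipath_Cons dp assms(1) by metis
  moreover have "last (cyc y) = (p^^(d y - 1)) y" using dy by (simp add: cyc_def last_map)
  moreover have "((p^^(d y - 1)) y, x) \<in> E" using pt_arc[OF assms(3), of "d y - 1"] dy pt_d[OF assms(3)] by simp
  ultimately show ?thesis unfolding dicycle_def cyc_def by simp
qed

lemma cyc_length: "length (cyc y) = d y + 1" by (simp add: cyc_def)


lemma interior_sub: "interior P \<subseteq> set P"
  by (cases P) (auto simp: interior_def dest: in_set_butlastD)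

lemma part1:
  assumes fin: "finite V" and EV: "E \<subseteq> V \<times> V" and xV: "x \<in> V"
    and reach: "\<forall>v\<in>V. (v,x) \<in> E\<^sup>*"
    and H: "\<forall>C. dicycle E C \<longrightarrow> card (set C) < n"
    and M1: "1 \<le> M"
    and big: "n * M^n < card (E``{x} - {x})"
  shows "\<exists>z m Ps. M \<le> m \<and> dipath_system E x z m 1 Ps \<and> short_system n x z m 1 Ps"
proof -
  define Y where "Y = E``{x} - {x}"
  have YV: "Y \<subseteq> V" using EV by (auto simp: Y_def)
  have Yr: "y \<in> Y \<Longrightarrow> (y,x) \<in> E\<^sup>*" for y using YV reach by auto
  have Yx: "y \<in> Y \<Longrightarrow> (x,y) \<in> E \<and> y \<noteq> x" for y by (auto simp: Y_def)
  have cyc_ok: "y \<in> Y \<Longrightarrow> dicycle E (cyc y)" for y using cyc_dicycle Yr Yx by blast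
  have cyc_short: "length (cyc y) < n" if "y \<in> Y" for y
  proof -
    have "card (set (cyc y)) < n" using H cyc_ok[OF that] by blast
    moreover have "distinct (cyc y)" using cyc_ok[OF that] by (simp add: dicycle_def dipath_def)
    ultimately show ?thesis by (simp add: distinct_card)
  qed
  have dY: "y \<in> Y \<Longrightarrow> d y + 1 < n" for y using cyc_short cyc_length by metis
  define S where "S = {(p^^i) y | y i. y \<in> Y}"
  have SV: "S \<subseteq> V" using pt_V[OF EV xV] YV Yr by (auto simp: S_def)
  have Sr: "v \<in> S \<Longrightarrow> (v,x) \<in> E\<^sup>*" for v using SV reach by auto
  have finS: "finite S" using SV fin finite_subset by blast
  have YS: "Y \<subseteq> S" unfolding S_def
  proof
    fix y assume "y \<in> Y" then show "y \<in> {(p^^i) y | y i. y \<in> Y}" by (auto intro!: exI[of _ 0])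
  qed
  have Sd: "d v < n" if vS: "v \<in> S" for v
  proof -
    obtain y i where "y \<in> Y" "v = (p^^i) y" using vS unfolding S_def by blast
    then show ?thesis using d_pt[OF Yr] dY by fastforce
  qed
  have Sp: "p v \<in> S" if vS: "v \<in> S" for v
  proof -
    obtain y i where "y \<in> Y" "v = (p^^i) y" using vS unfolding S_def by blast
    then have "p v = (p^^(Suc i)) y" by simp
    then show ?thesis using \<open>y \<in> Y\<close> unfolding S_def by blast
  qed
  define ch where "ch z = {w \<in> S. w \<noteq> x \<and> p w = z}" for z
  have finch: "finite (ch z)" for z using finS by (simp add: ch_def)
  have "\<exists>z. M < card (ch z)"
  proof (rule ccontr)
    assume "\<not> ?thesis"
    then have chM: "card (ch z) \<le> M" for z using not_less by blast
    define Sj where "Sj j = {v \<in> S. d v = j}" for j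
    have finSj: "finite (Sj j)" for j using finS by (simp add: Sj_def)
    have Sjb: "card (Sj j) \<le> M^j" for j
    proof (induction j)
      case 0
      have "Sj 0 \<subseteq> {x}" using d_0 Sr by (auto simp: Sj_def)
      then have "card (Sj 0) \<le> card {x}" by (intro card_mono) auto
      then show ?case by simp
    next
      case (Suc j)
      have "Sj (Suc j) \<subseteq> (\<Union>z\<in>Sj j. ch z)"
      proof
        fix v assume "v \<in> Sj (Suc j)"
        then have v: "v \<in> S" "d v = Suc j" by (auto simp: Sj_def)
        then have "v \<noteq> x" using d_x by auto
        moreover have "p v \<in> Sj j" using v Sp d_p Sr by (auto simp: Sj_def)
        ultimately show "v \<in> (\<Union>z\<in>Sj j. ch z)" using v by (auto simp: ch_def)
      qed
      then have "card (Sj (Suc j)) \<le> card (\<Union>z\<in>Sj j. ch z)"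
        by (intro card_mono) (auto simp: finch finSj)
      also have "\<dots> \<le> (\<Sum>z\<in>Sj j. card (ch z))" by (rule card_UN_le) (simp add: finSj)
      also have "\<dots> \<le> card (Sj j) * M" using sum_bounded_above[of "Sj j" "\<lambda>z. card (ch z)" M] chM by simp
      also have "\<dots> \<le> M^j * M" using Suc.IH by simp
      finally show ?case by (simp add: mult.commute)
    qed
    have bound: "card (Sj j) \<le> M^n" if "j < n" for j
      using Sjb[of j] power_increasing[of j n M] M1 that by simp
    have "S \<subseteq> (\<Union>j\<in>{..<n}. Sj j)" using Sd by (auto simp: Sj_def)
    then have "card S \<le> card (\<Union>j\<in>{..<n}. Sj j)" by (intro card_mono) (auto simp: finSj)
    also have "\<dots> \<le> (\<Sum>j<n. card (Sj j))" by (rule card_UN_le) simp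
    also have "\<dots> \<le> n * M^n" using sum_bounded_above[of "{..<n}" "\<lambda>j. card (Sj j)" "M^n"] bound by simp
    finally have "card Y \<le> n*M^n" using card_mono[OF finS YS] by linarith
    then show False using big Y_def by simp
  qed
  then obtain z where zc: "M < card (ch z)" by blast
  then obtain W where W: "W \<subseteq> ch z" "card W = Suc M" "finite W"
    using obtain_subset_with_card_n[of "Suc M" "ch z"] by auto
  have WS: "w \<in> W \<Longrightarrow> w \<in> S \<and> w \<noteq> x \<and> p w = z" for w using W by (auto simp: ch_def)
  have "\<forall>w\<in>W. \<exists>y i. y \<in> Y \<and> w = (p^^i) y" using WS unfolding S_def by blast
  then obtain yy ii where yi: "\<forall>w\<in>W. yy w \<in> Y \<and> w = (p^^(ii w)) (yy w)" by metis
  have "W \<noteq> {}" using W by auto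
  then obtain w0 where "w0 \<in> W" by blast
  then have zS: "z \<in> S" using WS Sp by metis
  have zr: "(z,x) \<in> E\<^sup>*" using Sr zS by blast
  have dw: "d w = d z + 1" if "w \<in> W" for w
  proof -
    have "d z = d w - 1" using d_p[OF Sr] WS that by metis
    moreover have "d w \<noteq> 0" using d_0 Sr WS that by metis
    ultimately show ?thesis by simp
  qed
  have dyy: "d (yy w) = ii w + d z + 1" if "w \<in> W" for w
  proof -
    have "d w = d (yy w) - ii w" using yi that d_pt[OF Yr] by metis
    then show ?thesis using dw[OF that] by simp
  qed
  have head: "(p^^(d ((p^^t) (yy w)) - d z - 1)) ((p^^t) (yy w)) = w" if "w \<in> W" "t \<le> ii w" for w t
  proof -
    have "d ((p^^t) (yy w)) = ii w + d z + 1 - t" using d_pt[OF Yr] yi that dyy by metis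
    then have "d ((p^^t) (yy w)) - d z - 1 + t = ii w" using that by simp
    then show ?thesis using pt_add yi that by metis
  qed
  have sep: "w = w'" if "w \<in> W" "w' \<in> W" "t \<le> ii w" "t' \<le> ii w'" "(p^^t) (yy w) = (p^^t') (yy w')"
    for w w' t t'
    using head[OF that(1,3)] head[OF that(2,4)] that(5) by metis
  have dge: "d z + 1 \<le> d ((p^^t) (yy w))" if "w \<in> W" "t \<le> ii w" for w t
  proof -
    have "yy w \<in> Y" using yi that by blast
    then have "d ((p^^t) (yy w)) = d (yy w) - t" by (rule d_pt[OF Yr])
    then show ?thesis using dyy[OF that(1)] that(2) by simp
  qed
  obtain ws where ws: "set ws = W" "distinct ws" using finite_distinct_list[OF W(3)] by blast
  have lws: "length ws = Suc M" using ws W distinct_card by metis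
  have yyx: "yy w \<noteq> x" "(x, yy w) \<in> E" "(yy w, x) \<in> E\<^sup>*" "yy w \<in> Y" if "w \<in> W" for w
    using yi that Yx Yr by auto
  show ?thesis
  proof (cases "z = x")
    case True
    define Ps where "Ps = map (\<lambda>w. cyc (yy w)) ws"
    have inter: "set (cyc (yy w)) \<inter> set (cyc (yy w')) = {x}" if "w \<in> W" "w' \<in> W" "w \<noteq> w'" for w w'
    proof -
      have "v = x" if vin: "v \<in> set (cyc (yy w))" "v \<in> set (cyc (yy w'))" for v
      proof (rule ccontr)
        assume "v \<noteq> x"
        then obtain t t' where "t < d (yy w)" "v = (p^^t) (yy w)" "t' < d (yy w')" "v = (p^^t') (yy w')"
          using vin unfolding set_cyc by auto
        moreover have "d (yy w) = ii w + 1" "d (yy w') = ii w' + 1" using dyy \<open>w \<in> W\<close> \<open>w' \<in> W\<close> True d_x by auto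
        ultimately show False using sep \<open>w \<in> W\<close> \<open>w' \<in> W\<close> \<open>w \<noteq> w'\<close> by (metis less_Suc_eq_le add.commute plus_1_eq_Suc)
      qed
      then show ?thesis by (auto simp: cyc_def)
    qed
    have inj: "inj_on (\<lambda>w. cyc (yy w)) W"
    proof (rule inj_onI)
      fix w w' assume a: "w \<in> W" "w' \<in> W" "cyc (yy w) = cyc (yy w')"
      have "yy w \<in> set (cyc (yy w))" using cyc_set[OF yyx(3)[OF a(1)], of 0] by simp
      then have "yy w \<in> set (cyc (yy w)) \<inter> set (cyc (yy w'))" using a by simp
      then show "w = w'" using inter a yyx(1)[OF a(1)] by blast
    qed
    have "dipath_system E x x M 1 Ps"
      unfolding dipath_system_def
    proof (intro conjI)
      show "0 < M" using M1 by simp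
      show "0 < (1::nat)" by simp
      show "length Ps = M + 1" using lws by (simp add: Ps_def)
      show "distinct Ps" unfolding Ps_def using ws inj by (simp add: distinct_map)
      show "if x = x then (\<forall>P\<in>set Ps. dicycle E P \<and> hd P = x) \<and>
        (\<forall>i<M + 1. \<forall>j<M + 1. i \<noteq> j \<longrightarrow> set (Ps ! i) \<inter> set (Ps ! j) = {x})
      else (\<forall>i<M. dipath E (Ps ! i) \<and> hd (Ps ! i) = x \<and> last (Ps ! i) = x) \<and>
        (\<forall>i. M \<le> i \<and> i < M + 1 \<longrightarrow> dipath E (Ps ! i) \<and> hd (Ps ! i) = x \<and> last (Ps ! i) = x) \<and>
        (\<forall>i<M + 1. \<forall>j<M + 1. i \<noteq> j \<longrightarrow> interior (Ps ! i) \<inter> interior (Ps ! j) = {})"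
      proof -
        have "\<forall>P\<in>set Ps. dicycle E P \<and> hd P = x"
        proof
          fix P assume "P \<in> set Ps"
          then obtain w where "w \<in> W" "P = cyc (yy w)" using ws by (auto simp: Ps_def)
          moreover have "dicycle E (cyc (yy w))" using cyc_ok yyx \<open>w \<in> W\<close> by blast
          moreover have "hd (cyc (yy w)) = x" by (simp add: cyc_def)
          ultimately show "dicycle E P \<and> hd P = x" by simp
        qed
        moreover have "\<forall>i<M + 1. \<forall>j<M + 1. i \<noteq> j \<longrightarrow> set (Ps ! i) \<inter> set (Ps ! j) = {x}"
        proof (intro allI impI)
          fix i j assume "i < M + 1" "j < M + 1" "i \<noteq> j"
          then have "ws ! i \<in> W" "ws ! j \<in> W" "ws ! i \<noteq> ws ! j" using ws lws nth_eq_iff_index_eq[of ws i j] by auto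
          then show "set (Ps ! i) \<inter> set (Ps ! j) = {x}" using inter \<open>i < M + 1\<close> \<open>j < M + 1\<close> lws
            by (simp add: Ps_def)
        qed
        ultimately show ?thesis by simp
      qed
    qed
    moreover have "short_system n x x M 1 Ps"
      unfolding short_system_def using ws cyc_short yyx by (auto simp: Ps_def)
    ultimately show ?thesis using True by blast
  next
    case False
    have dz: "0 < d z" using d_0 zr False by blast
    define P where "P w = x # map (\<lambda>t. (p^^t) (yy w)) [0..<ii w + 2]" for w
    define Q where "Q = map (\<lambda>t. (p^^t) z) [0..<d z + 1]"
    have Pdp: "dipath E (P w)" if "w \<in> W" for w
    proof -
      have r: "(yy w, x) \<in> E\<^sup>*" using yyx that by blast
      have dd: "d (yy w) = ii w + d z + 1" using dyy that by blast
      have dp: "dipath E (map (\<lambda>t. (p^^t) (yy w)) [0..<ii w + 2])"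
        apply (rule dipath_map)
        using pt_inj[OF r] pt_arc[OF r] dd by (auto simp: inj_on_def)
      have "x \<notin> set (map (\<lambda>t. (p^^t) (yy w)) [0..<ii w + 2])"
      proof
        assume "x \<in> set (map (\<lambda>t. (p^^t) (yy w)) [0..<ii w + 2])"
        then obtain t where "t < ii w + 2" "x = (p^^t) (yy w)" by (auto simp del: upt_Suc)
        then show False using pt_ne[OF r, of t] dd dz by simp
      qed
      moreover have "hd (map (\<lambda>t. (p^^t) (yy w)) [0..<ii w + 2]) = yy w" by (simp add: upt_conv_Cons del: upt_Suc)
      ultimately show ?thesis unfolding P_def using dipath_Cons dp yyx that by metis
    qed
    have Phd: "hd (P w) = x" for w by (simp add: P_def)
    have Plast: "last (P w) = z" if "w \<in> W" for w
    proof -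
      have "last (P w) = (p^^(Suc (ii w))) (yy w)" by (simp add: P_def last_map)
      also have "\<dots> = p w" using yi that by simp
      finally show ?thesis using WS that by blast
    qed
    have Qdp: "dipath E Q" unfolding Q_def
      apply (rule dipath_map)
      using pt_inj[OF zr] pt_arc[OF zr] by (auto simp: inj_on_def)
    have Qhd: "hd Q = z" by (simp add: Q_def upt_conv_Cons del: upt_Suc)
    have Qlast: "last Q = x" using pt_d[OF zr] by (simp add: Q_def last_map)
    have intP: "interior (P w) = (\<lambda>t. (p^^t) (yy w)) ` {0..ii w}" for w
    proof -
      have "interior (P w) = set (map (\<lambda>t. (p^^t) (yy w)) (butlast [0..<ii w + 2]))"
        by (simp add: P_def interior_def map_butlast del: upt_Suc)
      also have "butlast [0..<ii w + 2] = [0..<ii w + 1]"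
      proof -
        have "[0..<ii w + 2] = [0..<ii w + 1] @ [ii w + 1]" by simp
        then show ?thesis by (metis butlast_snoc)
      qed
      finally show ?thesis by (simp only: set_map set_upt Suc_eq_plus1[symmetric] atLeastLessThanSuc_atLeastAtMost)
    qed
    have Qd: "v \<in> set Q \<Longrightarrow> d v \<le> d z" for v using d_pt[OF zr] by (auto simp: Q_def)
    have disjPP: "interior (P w) \<inter> interior (P w') = {}" if "w \<in> W" "w' \<in> W" "w \<noteq> w'" for w w'
      using sep that unfolding intP by fastforce
    have disjPQ: "interior (P w) \<inter> interior Q = {}" if "w \<in> W" for w
    proof -
      have "v \<notin> interior Q" if "v \<in> interior (P w)" for v
      proof -
        obtain t where "t \<le> ii w" "v = (p^^t) (yy w)" using \<open>v \<in> interior (P w)\<close> unfolding intP by auto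
        then have "d z + 1 \<le> d v" using dge \<open>w \<in> W\<close> by blast
        then show ?thesis using Qd interior_sub by fastforce
      qed
      then show ?thesis by blast
    qed
    have shortPQ: "card (set (P w) \<union> set Q) < n" if "w \<in> W" for w
    proof -
      have r: "(yy w, x) \<in> E\<^sup>*" using yyx that by blast
      have dd: "d (yy w) = ii w + d z + 1" using dyy that by blast
      have zz: "z = (p^^(Suc (ii w))) (yy w)" using yi that WS by simp
      have "set (P w) \<subseteq> set (cyc (yy w))"
      proof
        fix v assume "v \<in> set (P w)"
        then have "v = x \<or> (\<exists>t < ii w + 2. v = (p^^t) (yy w))" by (auto simp: P_def simp del: upt_Suc)
        then show "v \<in> set (cyc (yy w))"
        proof
          assume "v = x" then show ?thesis by (simp add: cyc_def)
        next
          assume "\<exists>t < ii w + 2. v = (p^^t) (yy w)"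
          then obtain t where "t < ii w + 2" "v = (p^^t) (yy w)" by blast
          then show ?thesis using cyc_set[OF r, of t] dd by simp
        qed
      qed
      moreover have "set Q \<subseteq> set (cyc (yy w))"
      proof
        fix v assume "v \<in> set Q"
        then obtain s where "s \<le> d z" "v = (p^^s) z" by (auto simp: Q_def less_Suc_eq_le simp del: upt_Suc)
        then have "v = (p^^(s + Suc (ii w))) (yy w)" using zz pt_add by metis
        moreover have "s + Suc (ii w) \<le> d (yy w)" using dd \<open>s \<le> d z\<close> by simp
        ultimately show "v \<in> set (cyc (yy w))" using cyc_set[OF r, of "s + Suc (ii w)"] by simp
      qed
      ultimately have "card (set (P w) \<union> set Q) \<le> card (set (cyc (yy w)))" by (intro card_mono) auto
      also have "\<dots> \<le> length (cyc (yy w))" by (rule card_length)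
      also have "\<dots> < n" using cyc_short yyx that by blast
      finally show ?thesis .
    qed
    have injP: "inj_on P W"
    proof (rule inj_onI)
      fix w w' assume a: "w \<in> W" "w' \<in> W" "P w = P w'"
      have "yy w \<in> interior (P w)" unfolding intP by force
      then have "yy w \<in> interior (P w')" using a by simp
      then obtain t where "t \<le> ii w'" "yy w = (p^^t) (yy w')" unfolding intP by auto
      then show "w = w'" using sep[OF a(1,2), of 0 t] by simp
    qed
    define Ps where "Ps = map P ws @ [Q]"
    have Psi: "Ps ! i = (if i < Suc M then P (ws ! i) else Q)" if "i < Suc M + 1" for i
      using that lws by (auto simp: Ps_def nth_append)
    have wsi: "i < Suc M \<Longrightarrow> ws ! i \<in> W" for i using ws lws by auto
    have "dipath_system E x z (Suc M) 1 Ps"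
      unfolding dipath_system_def
    proof (intro conjI)
      show "0 < Suc M" by simp
      show "0 < (1::nat)" by simp
      show "length Ps = Suc M + 1" using lws by (simp add: Ps_def)
      show "distinct Ps" unfolding Ps_def using ws injP Phd Qhd False
        by (auto simp: distinct_map)
      show "if x = z then (\<forall>P\<in>set Ps. dicycle E P \<and> hd P = x) \<and>
        (\<forall>i<Suc M + 1. \<forall>j<Suc M + 1. i \<noteq> j \<longrightarrow> set (Ps ! i) \<inter> set (Ps ! j) = {x})
      else (\<forall>i<Suc M. dipath E (Ps ! i) \<and> hd (Ps ! i) = x \<and> last (Ps ! i) = z) \<and>
        (\<forall>i. Suc M \<le> i \<and> i < Suc M + 1 \<longrightarrow> dipath E (Ps ! i) \<and> hd (Ps ! i) = z \<and> last (Ps ! i) = x) \<and>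
        (\<forall>i<Suc M + 1. \<forall>j<Suc M + 1. i \<noteq> j \<longrightarrow> interior (Ps ! i) \<inter> interior (Ps ! j) = {})"
      proof -
        have "\<forall>i<Suc M. dipath E (Ps ! i) \<and> hd (Ps ! i) = x \<and> last (Ps ! i) = z"
          using Psi wsi Pdp Phd Plast by simp
        moreover have "\<forall>i. Suc M \<le> i \<and> i < Suc M + 1 \<longrightarrow> dipath E (Ps ! i) \<and> hd (Ps ! i) = z \<and> last (Ps ! i) = x"
          using Psi Qdp Qhd Qlast by auto
        moreover have "\<forall>i<Suc M + 1. \<forall>j<Suc M + 1. i \<noteq> j \<longrightarrow> interior (Ps ! i) \<inter> interior (Ps ! j) = {}"
        proof (intro allI impI)
          fix i j assume ij: "i < Suc M + 1" "j < Suc M + 1" "i \<noteq> j"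
          show "interior (Ps ! i) \<inter> interior (Ps ! j) = {}"
          proof (cases "i < Suc M \<and> j < Suc M")
            case True
            then have "ws ! i \<noteq> ws ! j" using ws lws ij nth_eq_iff_index_eq[of ws i j] by auto
            then show ?thesis using True Psi ij disjPP wsi by simp
          next
            case F: False
            then show ?thesis using Psi ij disjPQ wsi by (cases "i < Suc M") (auto simp: Int_commute)
          qed
        qed
        ultimately show ?thesis using False by simp
      qed
    qed
    moreover have "short_system n x z (Suc M) 1 Ps"
      unfolding short_system_def using False Psi wsi shortPQ
      by (auto simp: le_Suc_eq)
    ultimately show ?thesis by (intro exI[of _ z] exI[of _ "Suc M"] exI[of _ Ps]) auto
  qed
qed
end

lemma arc_cycle:
  assumes EV: "E \<subseteq> V \<times> V" and sc: "strongly_connected V E" and ab: "(a,b) \<in> E"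
  shows "\<exists>C. dicycle E C \<and> a \<in> set C \<and> b \<in> set C"
proof (cases "a = b")
  case True
  have "dicycle E [a]" using ab True by (simp add: dicycle_def dipath_def)
  then show ?thesis using True by force
next
  case False
  have "a \<in> V" "b \<in> V" using EV ab by auto
  then have r: "(b,a) \<in> E\<^sup>*" using sc by (simp add: strongly_connected_def)
  have "dicycle E (rt.cyc E a b)" using rt.cyc_dicycle[of a b E] ab False r by blast
  moreover have "a \<in> set (rt.cyc E a b)" by (simp add: rt.cyc_def)
  moreover have "b \<in> set (rt.cyc E a b)" using rt.cyc_set[OF r, of 0] by simp
  ultimately show ?thesis by blast
qed

lemma cycle_walk:
  assumes C: "dicycle E C" and a: "a \<in> set C" and b: "b \<in> set C"
  shows "\<exists>s < length C. (a,b) \<in> E^^s"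
proof -
  define l where "l = length C"
  have l0: "0 < l" using C by (simp add: l_def dicycle_def dipath_def)
  have arc: "(C!t, C!(Suc t mod l)) \<in> E" if "t < l" for t
  proof (cases "Suc t < l")
    case True
    then show ?thesis using C by (simp add: l_def dicycle_def dipath_def)
  next
    case False
    then have "Suc t = l" using that by simp
    then have tl: "t = length C - 1" by (simp add: l_def)
    then have "C!t = last C" "C!(Suc t mod l) = hd C" using l0
      using \<open>Suc t = l\<close> by (simp_all add: l_def last_conv_nth hd_conv_nth dicycle_def)
    then show ?thesis using C by (simp add: dicycle_def)
  qed
  have walk: "(C!i, C!((i+s) mod l)) \<in> E^^s" if "i < l" for s i
  proof (induction s)
    case 0
    then show ?case using that by simp
  next
    case (Suc s)
    have "(C!((i+s) mod l), C!(Suc ((i+s) mod l) mod l)) \<in> E" using arc l0 by simp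
    moreover have "Suc ((i+s) mod l) mod l = (i + Suc s) mod l" by (simp add: mod_Suc_eq)
    ultimately show ?case using Suc.IH relpow_Suc_I by metis
  qed
  obtain i where i: "i < l" "a = C!i" using a by (auto simp: l_def in_set_conv_nth)
  obtain j where j: "j < l" "b = C!j" using b by (auto simp: l_def in_set_conv_nth)
  define s where "s = (j + l - i) mod l"
  have "(i + s) mod l = (i + (j + l - i)) mod l" by (simp add: s_def mod_add_right_eq)
  also have "\<dots> = j" using i j by simp
  finally have "(a,b) \<in> E^^s" using walk[OF i(1), of s] i j by simp
  moreover have "s < length C" using l0 by (simp add: s_def l_def)
  ultimately show ?thesis by blast
qed

definition chainf where
  "chainf E x v L f \<longleftrightarrow> 0 < L \<and> (\<forall>i<L. dicycle E (f i)) \<and> x \<in> set (f 0) \<and> v \<in> set (f (L-1)) \<and>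
     (\<forall>i. Suc i < L \<longrightarrow> set (f i) \<inter> set (f (Suc i)) \<noteq> {})"

lemma chain_exists:
  assumes cyc: "\<And>a b. (a,b) \<in> E \<Longrightarrow> \<exists>C. dicycle E C \<and> a \<in> set C \<and> b \<in> set C"
    and xv: "(x,v) \<in> E\<^sup>+"
  shows "\<exists>L f. chainf E x v L f"
  using xv
proof (induction rule: trancl_induct)
  case (base y)
  then obtain C where "dicycle E C" "x \<in> set C" "y \<in> set C" using cyc by blast
  then have "chainf E x y 1 (\<lambda>_. C)" by (simp add: chainf_def)
  then show ?case by blast
next
  case (step y z)
  obtain L f where ch: "chainf E x y L f" using step.IH by blast
  obtain C where C: "dicycle E C" "y \<in> set C" "z \<in> set C" using cyc step.hyps(2) by blast
  define g where "g = f(L := C)"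
  have "chainf E x z (Suc L) g"
    unfolding chainf_def
  proof (intro conjI allI impI)
    show "0 < Suc L" by simp
    fix i assume "i < Suc L" then show "dicycle E (g i)" using ch C by (auto simp: g_def chainf_def less_Suc_eq)
  next
    show "x \<in> set (g 0)" using ch by (auto simp: g_def chainf_def)
    show "z \<in> set (g (Suc L - 1))" using C by (simp add: g_def)
  next
    fix i assume i: "Suc i < Suc L"
    show "set (g i) \<inter> set (g (Suc i)) \<noteq> {}"
    proof (cases "Suc i < L")
      case True then show ?thesis using ch by (simp add: g_def chainf_def)
    next
      case False
      then have "Suc i = L" using i by simp
      then have "g i = f (L-1)" "g (Suc i) = C" by (auto simp: g_def)
      then show ?thesis using ch C by (auto simp: chainf_def)
    qed
  qed
  then show ?case by blast
qed

lemma chain_min: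
  assumes ch: "chainf E x v L f" and mn: "\<forall>L' g. chainf E x v L' g \<longrightarrow> L \<le> L'"
    and ij: "i < j" "j < L" and int: "set (f i) \<inter> set (f j) \<noteq> {}"
  shows "j = Suc i"
proof (rule ccontr)
  assume ne: "j \<noteq> Suc i"
  define c where "c = j - i - 1"
  have c1: "1 \<le> c" using ij ne by (simp add: c_def)
  define g where "g t = (if t \<le> i then f t else f (t + c))" for t
  define L' where "L' = L - c"
  have "chainf E x v L' g"
    unfolding chainf_def
  proof (intro conjI allI impI)
    show "0 < L'" using ij by (simp add: L'_def c_def)
    fix t assume "t < L'" then show "dicycle E (g t)" using ch ij by (auto simp: g_def L'_def c_def chainf_def)
  next
    show "x \<in> set (g 0)" using ch by (simp add: g_def chainf_def)
    have "L' - 1 > i" "L' - 1 + c = L - 1" using ij by (auto simp: L'_def c_def)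
    then show "v \<in> set (g (L' - 1))" using ch by (simp add: g_def chainf_def)
  next
    fix t assume t: "Suc t < L'"
    show "set (g t) \<inter> set (g (Suc t)) \<noteq> {}"
    proof (cases "t < i")
      case True then show ?thesis using ch ij by (simp add: g_def chainf_def)
    next
      case False
      show ?thesis
      proof (cases "t = i")
        case True
        have "Suc i + c = j" using ij ne by (simp add: c_def)
        then show ?thesis using True int by (simp add: g_def)
      next
        case F2: False
        then have "t > i" using False by simp
        moreover have "Suc (t + c) < L" using t ij by (simp add: L'_def c_def)
        ultimately show ?thesis using ch by (simp add: g_def chainf_def)
      qed
    qed
  qed
  then have "L \<le> L'" using mn by blast
  then show False using c1 ij by (simp add: L'_def c_def)
qed

lemma chain_dist:
  assumes ch: "chainf E x v L f" and sh: "\<forall>i<L. card (set (f i)) < n"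
  shows "\<exists>s < L*n. (x,v) \<in> E^^s"
proof -
  have len: "length (f i) < n" if "i < L" for i
    using ch sh that distinct_card[of "f i"] by (auto simp: chainf_def dicycle_def dipath_def)
  have cl: "\<forall>u\<in>set (f i). \<exists>s < Suc i * n. (x,u) \<in> E^^s" if "i < L" for i
    using that
  proof (induction i)
    case 0
    show ?case
    proof
      fix u assume "u \<in> set (f 0)"
      then obtain s where "s < length (f 0)" "(x,u) \<in> E^^s"
        using cycle_walk[of E "f 0" x u] ch 0 by (auto simp: chainf_def)
      then show "\<exists>s < Suc 0 * n. (x,u) \<in> E^^s" using len[OF 0] less_trans by auto
    qed
  next
    case (Suc i)
    show ?case
    proof
      fix u assume u: "u \<in> set (f (Suc i))"
      obtain w where w: "w \<in> set (f i)" "w \<in> set (f (Suc i))" using ch Suc.prems by (auto simp: chainf_def)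
      obtain s1 where s1: "s1 < Suc i * n" "(x,w) \<in> E^^s1" using Suc.IH Suc.prems w by auto
      obtain s2 where s2: "s2 < length (f (Suc i))" "(w,u) \<in> E^^s2"
        using cycle_walk[of E "f (Suc i)" w u] ch Suc.prems w u by (auto simp: chainf_def)
      have "(x,u) \<in> E^^(s1+s2)" using s1 s2 by (auto simp: relpow_add)
      moreover have "s1 + s2 < Suc (Suc i) * n" using s1 s2 len[OF Suc.prems] by simp
      ultimately show "\<exists>s < Suc (Suc i) * n. (x,u) \<in> E^^s" by blast
    qed
  qed
  have "L - 1 < L" "Suc (L-1) = L" using ch by (auto simp: chainf_def)
  then show ?thesis using cl[of "L-1"] ch by (auto simp: chainf_def)
qed

lemma relpow_V: "E \<subseteq> V \<times> V \<Longrightarrow> x \<in> V \<Longrightarrow> (x,v) \<in> E^^s \<Longrightarrow> v \<in> V"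
  by (cases s) auto

lemma ball:
  assumes fin: "finite V" and EV: "E \<subseteq> V \<times> V" and xV: "x \<in> V"
    and deg: "\<forall>u\<in>V. card (E``{u}) \<le> D"
  shows "card {v. \<exists>s<r. (x,v) \<in> E^^s} \<le> (D+1)^r"
proof (induction r)
  case 0 then show ?case by simp
next
  case (Suc r)
  define B where "B r = {v. \<exists>s<r. (x,v) \<in> E^^s}" for r
  have BV: "B r \<subseteq> V" for r using relpow_V[OF EV xV] by (auto simp: B_def)
  have finB: "finite (B r)" for r using BV fin finite_subset by blast
  have finE: "finite (E``{u})" for u
    using EV fin by (metis Image_subset finite_subset)
  have "B (Suc r) \<subseteq> insert x (\<Union>u\<in>B r. E``{u})"
  proof
    fix v assume "v \<in> B (Suc r)"
    then obtain s where s: "s < Suc r" "(x,v) \<in> E^^s" by (auto simp: B_def)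
    show "v \<in> insert x (\<Union>u\<in>B r. E``{u})"
    proof (cases s)
      case 0 then show ?thesis using s by simp
    next
      case (Suc s')
      then obtain u where "(x,u) \<in> E^^s'" "(u,v) \<in> E" using s by auto
      then show ?thesis using s Suc by (auto simp: B_def)
    qed
  qed
  then have "card (B (Suc r)) \<le> card (insert x (\<Union>u\<in>B r. E``{u}))"
    by (intro card_mono) (auto simp: finB finE)
  also have "\<dots> \<le> Suc (card (\<Union>u\<in>B r. E``{u}))"
  proof -
    have "finite (\<Union>u\<in>B r. E``{u})" using finB finE by blast
    then show ?thesis by (simp add: card_insert_if)
  qed
  also have "\<dots> \<le> Suc (\<Sum>u\<in>B r. card (E``{u}))" using card_UN_le[OF finB[of r], of "\<lambda>u. E``{u}"] by simp
  also have "\<dots> \<le> Suc (card (B r) * D)"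
    using sum_bounded_above[of "B r" "\<lambda>u. card (E``{u})" D] deg BV by fastforce
  also have "\<dots> \<le> Suc ((D+1)^r * D)" using Suc.IH by (simp add: B_def)
  also have "\<dots> \<le> (D+1)^Suc r"
  proof -
    have "1 \<le> (D+1)^r" by simp
    then show ?thesis by (simp add: algebra_simps)
  qed
  finally show ?case by (simp add: B_def)
qed

theorem theorem3p4:
  shows "\<forall>n k :: nat. \<exists>N :: nat. \<forall>(V :: nat set) (E :: (nat \<times> nat) set).
     finite V \<and> E \<subseteq> V \<times> V \<and> strongly_connected V E \<and> N \<le> card V \<longrightarrow>
       (\<exists>C. dicycle E C \<and> n \<le> card (set C)) \<or>
       (\<exists>Cs. length Cs = k \<and> semi_chain E Cs \<and> narrow n Cs) \<or>
       (\<exists>x y m Ps. (int k - 1) * int n + 3 \<le> int m \<and>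
          dipath_system E x y m 1 Ps \<and> short_system n x y m 1 Ps)"
proof (intro allI)
  fix n k :: nat
  define M where "M = k*n+3"
  define T where "T = n * M^n"
  define D where "D = T + 1"
  show "\<exists>N :: nat. \<forall>(V :: nat set) (E :: (nat \<times> nat) set).
     finite V \<and> E \<subseteq> V \<times> V \<and> strongly_connected V E \<and> N \<le> card V \<longrightarrow>
       (\<exists>C. dicycle E C \<and> n \<le> card (set C)) \<or>
       (\<exists>Cs. length Cs = k \<and> semi_chain E Cs \<and> narrow n Cs) \<or>
       (\<exists>x y m Ps. (int k - 1) * int n + 3 \<le> int m \<and>
          dipath_system E x y m 1 Ps \<and> short_system n x y m 1 Ps)"
  proof (intro exI[of _ "(D+1)^(k*n) + 2"] allI impI)
    fix V :: "nat set" and E :: "(nat \<times> nat) set"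
    assume "finite V \<and> E \<subseteq> V \<times> V \<and> strongly_connected V E \<and> (D+1)^(k*n) + 2 \<le> card V"
    then have fin: "finite V" and EV: "E \<subseteq> V \<times> V" and sc: "strongly_connected V E"
      and big: "(D+1)^(k*n) + 2 \<le> card V" by auto
    show "(\<exists>C. dicycle E C \<and> n \<le> card (set C)) \<or>
       (\<exists>Cs. length Cs = k \<and> semi_chain E Cs \<and> narrow n Cs) \<or>
       (\<exists>x y m Ps. (int k - 1) * int n + 3 \<le> int m \<and>
          dipath_system E x y m 1 Ps \<and> short_system n x y m 1 Ps)"
    proof (cases "\<exists>C. dicycle E C \<and> n \<le> card (set C)")
      case True then show ?thesis by blast
    next
      case False
      then have H: "\<forall>C. dicycle E C \<longrightarrow> card (set C) < n" by (auto simp: not_le)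
      have reach: "\<forall>v\<in>V. (v,x) \<in> E\<^sup>*" if "x \<in> V" for x
        using sc that by (auto simp: strongly_connected_def)
      show ?thesis
      proof (cases "\<exists>x\<in>V. T < card (E``{x} - {x})")
        case True
        then obtain x where x: "x \<in> V" "n * M^n < card (E``{x} - {x})" by (auto simp: T_def)
        have "1 \<le> M" by (simp add: M_def)
        then obtain z m Ps where "M \<le> m" "dipath_system E x z m 1 Ps" "short_system n x z m 1 Ps"
          using rt.part1[OF fin EV x(1) reach[OF x(1)] H _ x(2)] by blast
        moreover have "(int k - 1) * int n + 3 \<le> int m"
        proof -
          have "int (k*n+3) \<le> int m" using \<open>M \<le> m\<close> unfolding M_def by (rule of_nat_mono)
          then have "int k * int n + 3 \<le> int m" by simp
          moreover have "(int k - 1) * int n \<le> int k * int n" by (simp add: algebra_simps)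
          ultimately show ?thesis by linarith
        qed
        ultimately show ?thesis by blast
      next
        case False
        have deg: "\<forall>u\<in>V. card (E``{u}) \<le> D"
        proof
          fix u assume "u \<in> V"
          have finE: "finite (E``{u})" using EV fin by (metis Image_subset finite_subset)
          have "card (E``{u}) \<le> card (insert u (E``{u} - {u}))" by (rule card_mono) (auto simp: finE)
          also have "\<dots> \<le> Suc (card (E``{u} - {u}))"
            using finE by (metis card_insert_if finite_Diff le_SucI le_refl)
          also have "\<dots> \<le> D" using False \<open>u \<in> V\<close> by (auto simp: D_def not_less)
          finally show "card (E``{u}) \<le> D" .
        qed
        have "V \<noteq> {}" using big by auto
        then obtain x where xV: "x \<in> V" by blast
        define B where "B = {v. \<exists>s<k*n. (x,v) \<in> E^^s}"
        have cB: "card B \<le> (D+1)^(k*n)" unfolding B_def by (rule ball[OF fin EV xV deg])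
        have BV: "B \<subseteq> V" using relpow_V[OF EV xV] by (auto simp: B_def)
        have "\<not> V \<subseteq> insert x B"
        proof
          assume "V \<subseteq> insert x B"
          then have "card V \<le> card (insert x B)" using BV fin finite_subset by (intro card_mono) auto
          also have "\<dots> \<le> Suc (card B)"
          proof -
            have "finite B" using BV fin finite_subset by blast
            then show ?thesis by (simp add: card_insert_if)
          qed
          finally show False using cB big by simp
        qed
        then obtain v where v: "v \<in> V" "v \<noteq> x" "v \<notin> B" by blast
        have "(x,v) \<in> E\<^sup>*" using reach[OF v(1)] xV by blast
        then have "(x,v) \<in> E\<^sup>+" using v(2) by (simp add: rtrancl_eq_or_trancl)
        then have "\<exists>L f. chainf E x v L f" using chain_exists[of E] arc_cycle[OF EV sc] by blast
        define L where "L = (LEAST L. \<exists>f. chainf E x v L f)"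
        obtain f where ch: "chainf E x v L f" unfolding L_def
          using LeastI_ex[OF \<open>\<exists>L f. chainf E x v L f\<close>] by blast
        have mn: "\<forall>L' g. chainf E x v L' g \<longrightarrow> L \<le> L'"
          unfolding L_def by (auto intro: Least_le)
        have cyc: "dicycle E (f i)" if "i < L" for i using ch that by (simp add: chainf_def)
        have sh: "\<forall>i<L. card (set (f i)) < n" using H cyc by blast
        have "k \<le> L"
        proof (rule ccontr)
          assume "\<not> k \<le> L"
          obtain s where "s < L*n" "(x,v) \<in> E^^s" using chain_dist[OF ch sh] by blast
          moreover have "L*n \<le> k*n" using \<open>\<not> k \<le> L\<close> by (intro mult_le_mono1) simp
          ultimately have "s < k*n" "(x,v) \<in> E^^s" by linarith+
          then have "v \<in> B" unfolding B_def by blast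
          then show False using v by blast
        qed
        define Cs where "Cs = map f [0..<k]"
        have "semi_chain E Cs"
          unfolding semi_chain_def
        proof (intro conjI allI impI)
          show "\<forall>C\<in>set Cs. dicycle E C" using cyc \<open>k \<le> L\<close> by (auto simp: Cs_def)
          fix i j assume ij: "i < length Cs" "j < length Cs" "i \<noteq> j"
          then have ijk: "i < k" "j < k" by (auto simp: Cs_def)
          show "(set (Cs ! i) \<inter> set (Cs ! j) \<noteq> {}) = (i = Suc j \<or> j = Suc i)"
          proof
            assume a: "set (Cs ! i) \<inter> set (Cs ! j) \<noteq> {}"
            show "i = Suc j \<or> j = Suc i"
            proof (cases "i < j")
              case True
              then show ?thesis using chain_min[OF ch mn True] a ijk \<open>k \<le> L\<close> by (auto simp: Cs_def)
            next
              case False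
              then have "j < i" using ij by simp
              then show ?thesis using chain_min[OF ch mn \<open>j < i\<close>] a ijk \<open>k \<le> L\<close>
                by (auto simp: Cs_def Int_commute)
            qed
          next
            assume "i = Suc j \<or> j = Suc i"
            then show "set (Cs ! i) \<inter> set (Cs ! j) \<noteq> {}" using ch ijk \<open>k \<le> L\<close>
              by (auto simp: Cs_def chainf_def Int_commute)
          qed
        qed
        moreover have "narrow n Cs" using sh \<open>k \<le> L\<close> by (auto simp: narrow_def Cs_def)
        moreover have "length Cs = k" by (simp add: Cs_def)
        ultimately show ?thesis by blast
      qed
    qed
  qed
qed

end
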